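(* Let $(X,d)$ be a compact metric space and $F$ a semiflow on $X$. Let $x,y\in X$ with $y\in\mathcal R_{\mathcal S}$. If $x\succcurlyeq_{\mathcal S} y$, then $x\succcurlyeq_{\mathcal C} y$. In particular $\mathcal R_{\mathcal S}\subset\mathcal R_{\mathcal C}$.
   Context: A semiflow on a metric space $(X,d)$ is a continuous map $F:[0,\infty)\times X\to X$, $(t,x)\mapsto F^t(x)$, with $F^0=\mathrm{id}$ and $F^{t+s}=F^t\circ F^s$ for all $t,s\ge0$. A curve is piecewise continuous if it is continuous except at finitely many points, at which one-sided limits exist. Conley chains: for $\varepsilon>0$, $T>0$, an $(\varepsilon,T)$-chain from $x$ to $y$ is a finite sequence $x=x_0,\dots,x_N=y$ in $X$ with times $t_i\ge T$ such that $d(F^{t_i}(x_i),x_{i+1})<\varepsilon$ for $i=0,\dots,N-1$. Write $x\succcurlyeq_{\mathcal C} y$ if for every $\varepsilon>0$ and $T>0$ there is an $(\varepsilon,T)$-chain from $x$ to $y$. Shadow chains: for $T\ge1$, a piecewise continuous $\gamma:[0,T]\to X$ is $\varepsilon$-close to $F$ if $d(\gamma(t+\tau),F^\tau(\gamma(t)))<\varepsilon$ for every $\tau\in[0,1]$ and $t\in[0,T-\tau]$. An $\varepsilon$-chain from $x$ to $y$ is such a $\gamma$ with $\gamma(0)=x$, $\gamma(T)=y$. Write $x\succcurlyeq_{\mathcal S} y$ if for every $\varepsilon>0$ there is an $\varepsilon$-chain from $x$ to $y$. For $\star\in\{\mathcal C,\mathcal S\}$: $x$ is $\star$-chain-recurrent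 if $x$ is a fixed point of $F$ or there is $y$ with $x\succcurlyeq_\star y$ and $y\succcurlyeq_\star x$; $\mathcal R_\star$ denotes the set of $\star$-chain-recurrent points. *)

theory Defs
  imports "HOL-Analysis.Analysis"
begin

definition semiflow :: "(real \<Rightarrow> 'a::metric_space \<Rightarrow> 'a) \<Rightarrow> bool" where
  "semiflow F \<longleftrightarrow>
     continuous_on ({0..} \<times> UNIV) (\<lambda>(t, x). F t x) \<and>
     F 0 = id \<and>
     (\<forall>t s. t \<ge> 0 \<longrightarrow> s \<ge> 0 \<longrightarrow> F (t + s) = F t \<circ> F s)"

definition piecewise_cont :: "real \<Rightarrow> (real \<Rightarrow> 'a::metric_space) \<Rightarrow> bool" where
  "piecewise_cont T \<gamma> \<longleftrightarrow>
     (\<exists>S. finite S \<and>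
        (\<forall>t \<in> {0..T} - S. continuous (at t within {0..T}) \<gamma>) \<and>
        (\<forall>t \<in> S \<inter> {0..T}.
            (0 < t \<longrightarrow> (\<exists>l. (\<gamma> \<longlongrightarrow> l) (at_left t))) \<and>
            (t < T \<longrightarrow> (\<exists>l. (\<gamma> \<longlongrightarrow> l) (at_right t)))))"

definition eps_close :: "(real \<Rightarrow> 'a::metric_space \<Rightarrow> 'a) \<Rightarrow> real \<Rightarrow> real \<Rightarrow> (real \<Rightarrow> 'a) \<Rightarrow> bool" where
  "eps_close F \<epsilon> T \<gamma> \<longleftrightarrow>
     (\<forall>\<tau> \<in> {0..1}. \<forall>t \<in> {0..T - \<tau>}. dist (\<gamma> (t + \<tau>)) (F \<tau> (\<gamma> t)) < \<epsilon>)"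

definition shadow_chain :: "(real \<Rightarrow> 'a::metric_space \<Rightarrow> 'a) \<Rightarrow> real \<Rightarrow> 'a \<Rightarrow> 'a \<Rightarrow> real \<Rightarrow> (real \<Rightarrow> 'a) \<Rightarrow> bool" where
  "shadow_chain F \<epsilon> x y T \<gamma> \<longleftrightarrow>
     T \<ge> 1 \<and> piecewise_cont T \<gamma> \<and> eps_close F \<epsilon> T \<gamma> \<and> \<gamma> 0 = x \<and> \<gamma> T = y"

definition shadow_rel :: "(real \<Rightarrow> 'a::metric_space \<Rightarrow> 'a) \<Rightarrow> 'a \<Rightarrow> 'a \<Rightarrow> bool" where
  "shadow_rel F x y \<longleftrightarrow> (\<forall>\<epsilon>>0. \<exists>T \<gamma>. shadow_chain F \<epsilon> x y T \<gamma>)"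

definition conley_chain :: "(real \<Rightarrow> 'a::metric_space \<Rightarrow> 'a) \<Rightarrow> real \<Rightarrow> real \<Rightarrow> 'a \<Rightarrow> 'a \<Rightarrow> bool" where
  "conley_chain F \<epsilon> T x y \<longleftrightarrow>
     (\<exists>N::nat. \<exists>xs::nat \<Rightarrow> 'a. \<exists>ts::nat \<Rightarrow> real.
        N \<ge> 1 \<and> xs 0 = x \<and> xs N = y \<and>
        (\<forall>i<N. ts i \<ge> T \<and> dist (F (ts i) (xs i)) (xs (Suc i)) < \<epsilon>))"

definition conley_rel :: "(real \<Rightarrow> 'a::metric_space \<Rightarrow> 'a) \<Rightarrow> 'a \<Rightarrow> 'a \<Rightarrow> bool" where
  "conley_rel F x y \<longleftrightarrow> (\<forall>\<epsilon>>0. \<forall>T>0. conley_chain F \<epsilon> T x y)"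

definition fixed_point :: "(real \<Rightarrow> 'a \<Rightarrow> 'a) \<Rightarrow> 'a \<Rightarrow> bool" where
  "fixed_point F x \<longleftrightarrow> (\<forall>t\<ge>0. F t x = x)"

definition R_S :: "(real \<Rightarrow> 'a::metric_space \<Rightarrow> 'a) \<Rightarrow> 'a set" where
  "R_S F = {x. fixed_point F x \<or> (\<exists>y. shadow_rel F x y \<and> shadow_rel F y x)}"

definition R_C :: "(real \<Rightarrow> 'a::metric_space \<Rightarrow> 'a) \<Rightarrow> 'a set" where
  "R_C F = {x. fixed_point F x \<or> (\<exists>y. conley_rel F x y \<and> conley_rel F y x)}"

end

theory Submission
  imports Defs
begin

lemma chain_compose:
  fixes F :: "real \<Rightarrow> 'a::metric_space \<Rightarrow> 'a"
  assumes U: "\<And>e. e>0 \<Longrightarrow> \<exists>\<eta>>0. \<forall>t\<in>{0..1}. \<forall>a b. dist a b < \<eta> \<longrightarrow> dist (F t a) (F t b) < e"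
    and sg: "\<And>t s. t\<ge>0 \<Longrightarrow> s\<ge>0 \<Longrightarrow> F (t+s) = F t \<circ> F s" and F0: "F 0 = id"
  shows "\<epsilon>>0 \<Longrightarrow> \<exists>\<delta>>0. \<forall>xs ts i j. j \<le> n \<longrightarrow>
     (\<forall>k<j. ts(i+k) \<in> {1/2..1} \<and> dist (F (ts(i+k)) (xs(i+k))) (xs(Suc(i+k))) < \<delta>) \<longrightarrow>
     dist (F (\<Sum>k<j. ts(i+k)) (xs i)) (xs(i+j)) < \<epsilon>"
proof (induction n arbitrary: \<epsilon>)
  case 0
  then show ?case using F0 by (intro exI[of _ 1]) auto
next
  case (Suc n)
  obtain \<eta> where eta: "\<eta>>0" "\<forall>t\<in>{0..1}. \<forall>a b. dist a b < \<eta> \<longrightarrow> dist (F t a) (F t b) < \<epsilon>/2"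
    using U[of "\<epsilon>/2"] Suc.prems by auto
  obtain \<delta>' where d': "\<delta>'>0" "\<forall>xs ts i j. j \<le> n \<longrightarrow>
     (\<forall>k<j. ts(i+k) \<in> {1/2..1} \<and> dist (F (ts(i+k)) (xs(i+k))) (xs(Suc(i+k))) < \<delta>') \<longrightarrow>
     dist (F (\<Sum>k<j. ts(i+k)) (xs i)) (xs(i+j)) < min \<eta> \<epsilon>"
    using Suc.IH[of "min \<eta> \<epsilon>"] eta(1) Suc.prems by auto
  show ?case
  proof (intro exI[of _ "min \<delta>' (\<epsilon>/2)"] conjI allI impI)
    show "0 < min \<delta>' (\<epsilon> / 2)" using d'(1) Suc.prems by simp
    fix xs ts i j
    assume j: "j \<le> Suc n" and H: "\<forall>k<j. ts (i + k) \<in> {1 / 2..1} \<and>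
      dist (F (ts (i + k)) (xs (i + k))) (xs (Suc (i + k))) < min \<delta>' (\<epsilon> / 2)"
    show "dist (F (\<Sum>k<j. ts (i + k)) (xs i)) (xs (i + j)) < \<epsilon>"
    proof (cases "j \<le> n")
      case True
      then show ?thesis using d'(2)[rule_format, of j ts i xs] H by fastforce
    next
      case False
      with j have jn: "j = Suc n" by simp
      define S where "S = (\<Sum>k<n. ts (i + k))"
      define t where "t = ts (i+n)"
      have "\<forall>k<n. ts (i+k) \<ge> 0"
      proof (intro allI impI)
        fix k assume "k < n"
        then have "k < j" using jn by simp
        then have "ts (i+k) \<in> {1/2..1}" using H by blast
        then show "ts (i+k) \<ge> 0" by simp
      qed
      then have S0: "S \<ge> 0" unfolding S_def
        by (intro sum_nonneg) auto
      have t01: "t \<in> {0..1}" using H jn unfolding t_def by fastforce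
      have sum: "(\<Sum>k<j. ts (i + k)) = t + S" using jn unfolding S_def t_def by simp
      have FF: "F (t + S) (xs i) = F t (F S (xs i))" using sg[of t S] S0 t01 by simp
      have d1: "dist (F S (xs i)) (xs (i+n)) < \<eta>"
        using d'(2)[rule_format, of n ts i xs] H jn unfolding S_def by fastforce
      have "dist (F t (F S (xs i))) (F t (xs (i+n))) < \<epsilon>/2" using eta(2) t01 d1 by blast
      moreover have "dist (F t (xs (i+n))) (xs (Suc (i+n))) < \<epsilon>/2" using H jn unfolding t_def by fastforce
      ultimately have "dist (F t (F S (xs i))) (xs (Suc (i+n))) < \<epsilon>"
        using dist_triangle[of "F t (F S (xs i))" "xs (Suc (i+n))" "F t (xs (i+n))"] by linarith
      then show ?thesis using sum FF jn by simp
    qed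
  qed
qed

definition Dn :: "(real \<Rightarrow> 'a::metric_space \<Rightarrow> 'a) \<Rightarrow> real \<Rightarrow> nat \<Rightarrow> 'a \<Rightarrow> 'a \<Rightarrow> bool" where
  "Dn F \<delta> n a b \<longleftrightarrow> (\<exists>N xs ts. N \<ge> n \<and> xs 0 = a \<and> xs N = b \<and>
     (\<forall>i<N. ts i \<in> {1/2..1} \<and> dist (F (ts i) (xs i)) (xs (Suc i)) < \<delta>))"

lemma shadow_to_D:
  assumes "shadow_chain F \<delta> a b L \<gamma>"
  shows "Dn F \<delta> 1 a b"
proof -
  have L1: "L \<ge> 1" and ec: "eps_close F \<delta> L \<gamma>" and g0: "\<gamma> 0 = a" and gL: "\<gamma> L = b"
    using assms unfolding shadow_chain_def by auto
  define m where "m = nat \<lceil>L\<rceil>"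
  have m1: "m \<ge> 1" using L1 unfolding m_def by linarith
  have mL: "real m \<ge> L" "real m < L + 1" unfolding m_def using L1 by linarith+
  define s where "s = L / real m"
  have s1: "s \<le> 1" "s \<ge> 1/2" "s > 0" using mL m1 L1 unfolding s_def by (auto simp: field_simps)
  have ms: "real m * s = L" using m1 unfolding s_def by simp
  show ?thesis unfolding Dn_def
  proof (intro exI[of _ m] exI[of _ "\<lambda>i. \<gamma> (real i * s)"] exI[of _ "\<lambda>_. s"] conjI allI impI)
    show "1 \<le> m" by (rule m1)
    show "\<gamma> (real 0 * s) = a" using g0 by simp
    show "\<gamma> (real m * s) = b" using ms gL by simp
    fix i assume i: "i < m"
    show "s \<in> {1/2..1}" using s1 by simp
    have "real (Suc i) * s \<le> real m * s" using i s1 by (intro mult_right_mono) auto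
    then have t: "real i * s \<in> {0..L - s}" using ms s1 by (auto simp: algebra_simps)
    have "dist (\<gamma> (real i * s + s)) (F s (\<gamma> (real i * s))) < \<delta>"
      using ec t s1 unfolding eps_close_def by auto
    moreover have "real i * s + s = real (Suc i) * s" by (simp add: algebra_simps)
    ultimately show "dist (F s (\<gamma> (real i * s))) (\<gamma> (real (Suc i) * s)) < \<delta>"
      by (simp add: dist_commute)
  qed
qed

lemma Dn_concat:
  assumes "Dn F \<delta> n1 a b" "Dn F \<delta> n2 b c"
  shows "Dn F \<delta> (n1+n2) a c"
proof -
  obtain N1 xs1 ts1 where A: "N1 \<ge> n1" "xs1 0 = a" "xs1 N1 = b"
     "\<forall>i<N1. ts1 i \<in> {1/2..1} \<and> dist (F (ts1 i) (xs1 i)) (xs1 (Suc i)) < \<delta>"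
    using assms(1) unfolding Dn_def by blast
  obtain N2 xs2 ts2 where B: "N2 \<ge> n2" "xs2 0 = b" "xs2 N2 = c"
     "\<forall>i<N2. ts2 i \<in> {1/2..1} \<and> dist (F (ts2 i) (xs2 i)) (xs2 (Suc i)) < \<delta>"
    using assms(2) unfolding Dn_def by blast
  show ?thesis unfolding Dn_def
  proof (intro exI[of _ "N1+N2"] exI[of _ "\<lambda>i. if i \<le> N1 then xs1 i else xs2 (i - N1)"]
      exI[of _ "\<lambda>i. if i < N1 then ts1 i else ts2 (i - N1)"] conjI allI impI)
    show "n1 + n2 \<le> N1 + N2" using A B by simp
    show "(if 0 \<le> N1 then xs1 0 else xs2 (0 - N1)) = a" using A by simp
    show "(if N1 + N2 \<le> N1 then xs1 (N1 + N2) else xs2 (N1 + N2 - N1)) = c"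
      using A B by auto
    fix i assume i: "i < N1 + N2"
    show "(if i < N1 then ts1 i else ts2 (i - N1)) \<in> {1/2..1}" using A(4) B(4) i by auto
    show "dist (F (if i < N1 then ts1 i else ts2 (i - N1)) (if i \<le> N1 then xs1 i else xs2 (i - N1)))
       (if Suc i \<le> N1 then xs1 (Suc i) else xs2 (Suc i - N1)) < \<delta>"
    proof (cases "i < N1")
      case True
      then show ?thesis using A(4) by auto
    next
      case False
      then have e1: "(if i \<le> N1 then xs1 i else xs2 (i - N1)) = xs2 (i - N1)" using A B by auto
      have e2: "Suc i - N1 = Suc (i - N1)" using False by simp
      have "i - N1 < N2" using False i by simp
      then show ?thesis using B(4) False e1 e2 by auto
    qed
  qed
qed

lemma Dn_mono: "Dn F \<delta> n a b \<Longrightarrow> m \<le> n \<Longrightarrow> Dn F \<delta> m a b"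
  unfolding Dn_def by (blast intro: le_trans)

lemma Dn_repeat:
  assumes "Dn F \<delta> 1 y y" "Dn F \<delta> 1 x y"
  shows "Dn F \<delta> (Suc k) x y"
proof (induction k)
  case 0
  then show ?case using assms(2) by simp
next
  case (Suc k)
  then show ?case using Dn_concat[OF Suc assms(1)] by simp
qed

lemma group:
  fixes F :: "real \<Rightarrow> 'a::metric_space \<Rightarrow> 'a"
  assumes P: "\<forall>xs ts i j. j \<le> 2*K \<longrightarrow>
     (\<forall>k<j. ts(i+k) \<in> {1/2..1} \<and> dist (F (ts(i+k)) (xs(i+k))) (xs(Suc(i+k))) < \<delta>) \<longrightarrow>
     dist (F (\<Sum>k<j. ts(i+k)) (xs i)) (xs(i+j)) < \<epsilon>"
    and K1: "K \<ge> 1" and KT: "real K / 2 \<ge> T"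
    and D: "Dn F \<delta> K x y"
  shows "conley_chain F \<epsilon> T x y"
proof -
  obtain N xs ts where A: "N \<ge> K" "xs 0 = x" "xs N = y"
     "\<forall>i<N. ts i \<in> {1/2..1} \<and> dist (F (ts i) (xs i)) (xs (Suc i)) < \<delta>"
    using D unfolding Dn_def by blast
  define q where "q = N div K"
  have q1: "q \<ge> 1" unfolding q_def using A(1) K1
    by (metis div_le_mono div_self not_one_le_zero)
  have Nq: "N = q * K + N mod K" "N mod K < K" unfolding q_def using K1 by auto
  define e where "e g = (if Suc g < q then Suc g * K else N)" for g
  define xs' where "xs' g = (if g < q then xs (g*K) else xs N)" for g
  define ts' where "ts' g = (\<Sum>k< e g - g*K. ts (g*K + k))" for g
  have key: "K \<le> e g - g*K \<and> e g - g*K \<le> 2*K \<and> g*K + (e g - g*K) = e g \<and> e g \<le> N" if g: "g < q" for g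
  proof (cases "Suc g < q")
    case True
    have "Suc g * K \<le> q * K" using True by (intro mult_right_mono) auto
    then show ?thesis using True Nq unfolding e_def by auto
  next
    case False
    then have gq: "q = Suc g" using g by simp
    then show ?thesis using Nq unfolding e_def by (auto simp: algebra_simps)
  qed
  show ?thesis unfolding conley_chain_def
  proof (intro exI[of _ q] exI[of _ xs'] exI[of _ ts'] conjI allI impI)
    show "1 \<le> q" by (rule q1)
    show "xs' 0 = x" using q1 A unfolding xs'_def by simp
    show "xs' q = y" using A unfolding xs'_def by simp
    fix g assume g: "g < q"
    define j where "j = e g - g*K"
    have kj: "K \<le> j" "j \<le> 2*K" "g*K + j = e g" "e g \<le> N" using key[OF g] unfolding j_def by auto
    have steps: "\<forall>k<j. ts(g*K+k) \<in> {1/2..1} \<and> dist (F (ts(g*K+k)) (xs(g*K+k))) (xs(Suc(g*K+k))) < \<delta>"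
      using A(4) kj by auto
    have "(\<Sum>k<j. (1/2::real)) \<le> (\<Sum>k<j. ts (g*K + k))"
      using steps by (intro sum_mono) auto
    then have "real j / 2 \<le> ts' g" unfolding ts'_def j_def by simp
    moreover have "real K \<le> real j" using kj by simp
    ultimately show "T \<le> ts' g" using KT by linarith
    have xe: "xs' (Suc g) = xs (e g)" unfolding xs'_def e_def by auto
    have "dist (F (\<Sum>k<j. ts(g*K+k)) (xs (g*K))) (xs(g*K+j)) < \<epsilon>"
      using P[rule_format, of j ts "g*K" xs] kj steps by blast
    then show "dist (F (ts' g) (xs' g)) (xs' (Suc g)) < \<epsilon>"
      using g xe kj unfolding ts'_def xs'_def j_def by simp
  qed
qed

lemma main:
  fixes F :: "real \<Rightarrow> 'a::metric_space \<Rightarrow> 'a" and x y :: 'a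
  assumes cpt: "compact (UNIV :: 'a set)"
    and sf: "semiflow F"
    and yR: "y \<in> R_S F"
    and xy: "shadow_rel F x y"
  shows "conley_rel F x y"
proof -
  have cont: "continuous_on ({0..} \<times> UNIV) (\<lambda>(t, x). F t x)" and F0: "F 0 = id"
    and sg: "\<And>t s. t\<ge>0 \<Longrightarrow> s\<ge>0 \<Longrightarrow> F (t+s) = F t \<circ> F s"
    using sf unfolding semiflow_def by auto
  have c1: "continuous_on ({0..1} \<times> UNIV) (\<lambda>(t, x). F t x)"
    by (rule continuous_on_subset[OF cont]) auto
  have k1: "compact ({0..1::real} \<times> (UNIV::'a set))" by (intro compact_Times cpt compact_Icc)
  have uc: "uniformly_continuous_on ({0..1} \<times> UNIV) (\<lambda>(t, x). F t x)"
    by (rule compact_uniformly_continuous[OF c1 k1])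
  have U: "\<exists>\<eta>>0. \<forall>t\<in>{0..1}. \<forall>a b. dist a b < \<eta> \<longrightarrow> dist (F t a) (F t b) < e" if e: "e > 0" for e
  proof -
    obtain d where d: "d > 0" "\<forall>p\<in>{0..1} \<times> UNIV. \<forall>p'\<in>{0..1} \<times> UNIV. dist p' p < d \<longrightarrow>
        dist ((\<lambda>(t, x). F t x) p') ((\<lambda>(t, x). F t x) p) < e"
      using uc e unfolding uniformly_continuous_on_def by metis
    show ?thesis
    proof (intro exI[of _ d] conjI ballI allI impI)
      show "d > 0" by (rule d(1))
      fix t and a b :: 'a assume t: "t \<in> {0..1::real}" and ab: "dist a b < d"
      have "dist (t, a) (t, b) = dist a b" by (simp add: dist_Pair_Pair)
      then show "dist (F t a) (F t b) < e" using d(2) t ab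
        by (metis (no_types, lifting) SigmaI UNIV_I case_prod_conv dist_commute)
    qed
  qed
  show ?thesis unfolding conley_rel_def
  proof (intro allI impI)
    fix \<epsilon> T :: real assume e: "\<epsilon> > 0" and T: "T > 0"
    define K where "K = nat \<lceil>2*T\<rceil> + 1"
    have K1: "K \<ge> 1" unfolding K_def by simp
    have "real (nat \<lceil>2*T\<rceil>) = of_int \<lceil>2*T\<rceil>" using T by simp
    moreover have "of_int \<lceil>2*T\<rceil> \<ge> 2*T" by (rule le_of_int_ceiling)
    moreover have "real K = real (nat \<lceil>2*T\<rceil>) + 1" unfolding K_def by simp
    ultimately have "real K \<ge> 2*T" by linarith
    then have KT: "real K / 2 \<ge> T" by simp
    obtain \<delta> where d: "\<delta> > 0" "\<forall>xs ts i j. j \<le> 2*K \<longrightarrow>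
     (\<forall>k<j. ts(i+k) \<in> {1/2..1} \<and> dist (F (ts(i+k)) (xs(i+k))) (xs(Suc(i+k))) < \<delta>) \<longrightarrow>
     dist (F (\<Sum>k<j. ts(i+k)) (xs i)) (xs(i+j)) < \<epsilon>"
      using chain_compose[of F \<epsilon> "2*K", OF U sg F0 e] by blast
    have Dxy: "Dn F \<delta> 1 x y" using xy d(1) shadow_to_D unfolding shadow_rel_def by blast
    have Dyy: "Dn F \<delta> 1 y y"
    proof (cases "fixed_point F y")
      case True
      then have "F 1 y = y" unfolding fixed_point_def by simp
      then show ?thesis unfolding Dn_def using d(1)
        by (intro exI[of _ 1] exI[of _ "\<lambda>_. y"] exI[of _ "\<lambda>_. 1"]) auto
    next
      case False
      then obtain z where "shadow_rel F y z" "shadow_rel F z y" using yR unfolding R_S_def by auto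
      then have "Dn F \<delta> 1 y z" "Dn F \<delta> 1 z y" using d(1) shadow_to_D unfolding shadow_rel_def by blast+
      from Dn_concat[OF this] show ?thesis by (rule Dn_mono) simp
    qed
    have "Dn F \<delta> (Suc (K - 1)) x y" by (rule Dn_repeat[OF Dyy Dxy])
    then have "Dn F \<delta> K x y" using K1 by simp
    then show "conley_chain F \<epsilon> T x y" by (rule group[OF d(2) K1 KT])
  qed
qed

theorem proposition3p5:
  fixes F :: "real \<Rightarrow> 'a::metric_space \<Rightarrow> 'a" and x y :: 'a
  assumes "compact (UNIV :: 'a set)"
    and "semiflow F"
    and "y \<in> R_S F"
    and "shadow_rel F x y"
  shows "conley_rel F x y \<and> R_S F \<subseteq> R_C F"
proof
  show "conley_rel F x y" by (rule main[OF assms])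
  show "R_S F \<subseteq> R_C F"
  proof
    fix w assume w: "w \<in> R_S F"
    show "w \<in> R_C F"
    proof (cases "fixed_point F w")
      case True
      then show ?thesis unfolding R_C_def by simp
    next
      case False
      then obtain z where wz: "shadow_rel F w z" and zw: "shadow_rel F z w" using w unfolding R_S_def by auto
      have zR: "z \<in> R_S F" using wz zw unfolding R_S_def by auto
      have "conley_rel F w z" by (rule main[OF assms(1,2) zR wz])
      moreover have "conley_rel F z w" by (rule main[OF assms(1,2) w zw])
      ultimately show ?thesis unfolding R_C_def by auto
    qed
  qed
qed

end
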